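(* Let $\{P_{(\beta,\eta,\zeta)}\}$ be a semiparametric model with $\beta\in\mathbb R^p$, $\zeta\in\Xi\subset\mathbb R^q$, $\eta\in\mathcal H_\eta$ (a subset of a Banach space), and let $\phi_\zeta:\mathcal H_\eta\to\mathcal H_\eta$ be a full rank reparameterization (defined in the context), with $\bar\eta=\phi_\zeta(\eta)$ and $\bar\theta=(\beta,\bar\eta,\zeta)$. Then for every $(\beta,\eta,\zeta)$ the efficient score for $\beta$ computed in the original parameterization at $\theta=(\beta,\eta,\zeta)$ equals the efficient score for $\beta$ computed in the reparameterized model at $\bar\theta=(\beta,\phi_\zeta(\eta),\zeta)$, i.e. $\tilde l_\beta(\theta)=\tilde\ell_\beta(\bar\theta)$. Consequently the efficient information matrices $\tilde I_\beta(\theta)=P_\theta\tilde l_\beta\tilde l_\beta^T$ and $\tilde{\mathcal I}_\beta(\bar\theta)=P_\theta\tilde\ell_\beta\tilde\ell_\beta^T$ also coincide.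
   Context: Let $\dot l_\beta$ denote the score for $\beta$ (derivative of the one-observation log-likelihood in $\beta$), and let $\dot l_\eta:\overline{\mathcal H}_\eta\to L_2^0(P_\theta)$ be the score operator for $\eta$ (a bounded linear map, $\overline{\mathcal H}_\eta$ the closed linear span of $\mathcal H_\eta$, $L_2^0(P_\theta)$ the mean-zero square integrable functions), with adjoint $\dot l_\eta^*$; assume the information operator $\dot l_\eta^*\dot l_\eta$ is invertible. The efficient score is $\tilde l_\beta=(I-\dot l_\eta(\dot l_\eta^*\dot l_\eta)^{-1}\dot l_\eta^* )\dot l_\beta$; analogously $\tilde\ell_\beta$ is defined with $\dot\ell_{\bar\eta}$, the score operator for $\bar\eta$ in the reparameterized model $\ell_1(\beta,\bar\eta,\zeta)=l_1(\beta,\phi_\zeta^{-1}(\bar\eta),\zeta)$. A full rank reparameterization is a family of one-to-one maps $\phi_\zeta:\mathcal H_\eta\to\mathcal H_\eta$, $\zeta\in\Xi$, that is Hadamard differentiable tangentially to $\mathcal H_\eta$ uniformly over $\zeta\in\Xi$ (i.e. $\sup_\zeta\|(\phi_\zeta(\eta+t_nh_n(\zeta))-\phi_\zeta(\eta))/t_n-\dot\phi_\zeta(\eta)(h(\zeta))\|\to0$ whenever $t_n\to0$ and $\sup_\zeta\|h_n(\zeta)-h(\zeta)\|\to0$), whose derivative $\dot\phi_\zeta$ is linear, one-to-one and continuously invertible uniformly over $\zeta$ (there is $c>0$ with $\|\dot\phi_\zeta(h)\|\ge c\|h\|$ for all $h,\zeta$), and such that under the null $\beta=\beta_0$ the reparameterized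 likelihood $\ell_1(\beta_0,\bar\eta,\zeta)$ does not depend on $\zeta$ at the null value $\bar\eta_0$. *)

theory Defs
  imports "HOL-Probability.Probability"
begin

definition cspan :: "'h::real_normed_vector set \<Rightarrow> 'h set" where
  "cspan H = closure (span H)"

definition L2_0 :: "'x measure \<Rightarrow> ('x \<Rightarrow> real) \<Rightarrow> bool" where
  "L2_0 M f \<longleftrightarrow> f \<in> borel_measurable M \<and> integrable M (\<lambda>x. (f x)\<^sup>2) \<and> integral\<^sup>L M f = 0"

definition ip :: "'x measure \<Rightarrow> ('x \<Rightarrow> real) \<Rightarrow> ('x \<Rightarrow> real) \<Rightarrow> real" where
  "ip M f g = integral\<^sup>L M (\<lambda>x. f x * g x)"

definition model_measure ::
  "'x measure \<Rightarrow> ('b \<Rightarrow> 'e \<Rightarrow> 'z \<Rightarrow> 'x \<Rightarrow> real) \<Rightarrow> 'b \<Rightarrow> 'e \<Rightarrow> 'z \<Rightarrow> 'x measure" where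
  "model_measure \<mu> l b e z = density \<mu> (\<lambda>x. ennreal (exp (l b e z x)))"

definition beta_score ::
  "'x measure \<Rightarrow> (real^'p \<Rightarrow> 'x \<Rightarrow> real) \<Rightarrow> real^'p \<Rightarrow> ('x \<Rightarrow> real^'p) \<Rightarrow> bool" where
  "beta_score M L b0 s \<longleftrightarrow>
     (\<forall>x. ((\<lambda>b. L b x) has_derivative (\<lambda>v. v \<bullet> s x)) (at b0)) \<and>
     (\<forall>j. L2_0 M (\<lambda>x. s x $ j))"

definition score_op ::
  "'x measure \<Rightarrow> 'h::real_normed_vector set \<Rightarrow> 'h set \<Rightarrow> ('h \<Rightarrow> 'x \<Rightarrow> real) \<Rightarrow> 'h
     \<Rightarrow> ('h \<Rightarrow> 'x \<Rightarrow> real) \<Rightarrow> bool" where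
  "score_op M \<Theta> H L e0 A \<longleftrightarrow>
     (\<forall>h\<in>cspan H. L2_0 M (A h)) \<and>
     (\<forall>h\<in>cspan H. \<forall>k\<in>cspan H. \<forall>a b::real.
        AE x in M. A (a *\<^sub>R h + b *\<^sub>R k) x = a * A h x + b * A k x) \<and>
     (\<exists>C. \<forall>h\<in>cspan H. ip M (A h) (A h) \<le> C * (norm h)\<^sup>2) \<and>
     (\<forall>h\<in>H. \<exists>\<gamma>. \<gamma> 0 = e0 \<and> at 0 within {t. \<gamma> t \<in> \<Theta>} \<noteq> bot \<and>
        ((\<lambda>t. (\<gamma> t - e0) /\<^sub>R t) \<longlongrightarrow> h) (at 0 within {t. \<gamma> t \<in> \<Theta>})) \<and>
     (\<forall>\<gamma> h. h \<in> cspan H \<and> \<gamma> 0 = e0 \<and>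
        ((\<lambda>t. (\<gamma> t - e0) /\<^sub>R t) \<longlongrightarrow> h) (at 0 within {t. \<gamma> t \<in> \<Theta>}) \<longrightarrow>
        (\<forall>x. ((\<lambda>t. (L (\<gamma> t) x - L e0 x) / t) \<longlongrightarrow> A h x) (at 0 within {t. \<gamma> t \<in> \<Theta>})))"

text \<open>The information operator A^* A (A^* g is the functional k \<mapsto> <A k, g> on the
  closed span) is invertible: every bounded linear functional F on the closed span
  equals A^* A u for exactly one u in the closed span.\<close>
definition info_invertible ::
  "'x measure \<Rightarrow> 'h::real_normed_vector set \<Rightarrow> ('h \<Rightarrow> 'x \<Rightarrow> real) \<Rightarrow> bool" where
  "info_invertible M H A \<longleftrightarrow>
     (\<forall>F. (\<forall>h\<in>cspan H. \<forall>k\<in>cspan H. \<forall>a b::real. F (a *\<^sub>R h + b *\<^sub>R k) = a * F h + b * F k) \<and>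
          (\<exists>C. \<forall>h\<in>cspan H. \<bar>F h\<bar> \<le> C * norm h) \<longrightarrow>
          (\<exists>!u. u \<in> cspan H \<and> (\<forall>k\<in>cspan H. ip M (A k) (A u) = F k)))"

text \<open>Efficient score (I - A (A^*A)^{-1} A^*) s, componentwise.\<close>
definition eff_score ::
  "'x measure \<Rightarrow> 'h::real_normed_vector set \<Rightarrow> ('h \<Rightarrow> 'x \<Rightarrow> real) \<Rightarrow> ('x \<Rightarrow> real^'p)
     \<Rightarrow> 'x \<Rightarrow> real^'p" where
  "eff_score M H A s = (\<lambda>x. \<chi> j. s x $ j -
      A (THE u. u \<in> cspan H \<and> (\<forall>k\<in>cspan H. ip M (A k) (A u) = ip M (A k) (\<lambda>y. s y $ j))) x)"

definition eff_info :: "'x measure \<Rightarrow> ('x \<Rightarrow> real^'p) \<Rightarrow> real^'p^'p" where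
  "eff_info M e = (\<chi> i j. integral\<^sup>L M (\<lambda>x. e x $ i * e x $ j))"

definition reparam_lik ::
  "'h set \<Rightarrow> ('z \<Rightarrow> 'h \<Rightarrow> 'h) \<Rightarrow> ('b \<Rightarrow> 'h \<Rightarrow> 'z \<Rightarrow> 'x \<Rightarrow> real) \<Rightarrow> 'b \<Rightarrow> 'h \<Rightarrow> 'z \<Rightarrow> 'x \<Rightarrow> real" where
  "reparam_lik H \<phi> l b eb z x = l b (inv_into H (\<phi> z) eb) z x"

definition hadamard_unif ::
  "'h::real_normed_vector set \<Rightarrow> 'z set \<Rightarrow> ('z \<Rightarrow> 'h \<Rightarrow> 'h) \<Rightarrow> 'h \<Rightarrow> ('z \<Rightarrow> 'h \<Rightarrow> 'h) \<Rightarrow> bool" where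
  "hadamard_unif H \<Xi> \<phi> e0 D \<longleftrightarrow>
     (\<forall>(t::nat \<Rightarrow> real) (hs::nat \<Rightarrow> 'z \<Rightarrow> 'h) (h::'z \<Rightarrow> 'h).
        t \<longlonglongrightarrow> 0 \<and> (\<forall>n. t n \<noteq> 0) \<and> (\<forall>n. \<forall>z\<in>\<Xi>. e0 + t n *\<^sub>R hs n z \<in> H) \<and>
        (\<forall>z\<in>\<Xi>. h z \<in> H) \<and>
        (\<forall>\<epsilon>>0. \<forall>\<^sub>F n in sequentially. \<forall>z\<in>\<Xi>. norm (hs n z - h z) < \<epsilon>) \<longrightarrow>
        (\<forall>\<epsilon>>0. \<forall>\<^sub>F n in sequentially. \<forall>z\<in>\<Xi>.
           norm ((\<phi> z (e0 + t n *\<^sub>R hs n z) - \<phi> z e0) /\<^sub>R t n - D z (h z)) < \<epsilon>))"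

text \<open>Full rank reparameterization (with null value b0 of beta and null value eb0 of
  the reparameterized nuisance parameter).\<close>
definition full_rank_reparam ::
  "'h::real_normed_vector set \<Rightarrow> 'z set \<Rightarrow> ('z \<Rightarrow> 'h \<Rightarrow> 'h) \<Rightarrow> ('h \<Rightarrow> 'z \<Rightarrow> 'h \<Rightarrow> 'h)
     \<Rightarrow> ('b \<Rightarrow> 'h \<Rightarrow> 'z \<Rightarrow> 'x \<Rightarrow> real) \<Rightarrow> 'b \<Rightarrow> 'h \<Rightarrow> bool" where
  "full_rank_reparam H \<Xi> \<phi> D l b0 eb0 \<longleftrightarrow>
     (\<forall>z\<in>\<Xi>. \<phi> z ` H \<subseteq> H \<and> inj_on (\<phi> z) H) \<and>
     (\<forall>e\<in>H. hadamard_unif H \<Xi> \<phi> e (D e)) \<and>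
     (\<forall>e\<in>H. \<forall>z\<in>\<Xi>.
        (\<forall>h\<in>cspan H. \<forall>k\<in>cspan H. \<forall>a b::real.
           D e z (a *\<^sub>R h + b *\<^sub>R k) = a *\<^sub>R D e z h + b *\<^sub>R D e z k) \<and>
        (\<exists>C. \<forall>h\<in>cspan H. norm (D e z h) \<le> C * norm h) \<and>
        inj_on (D e z) (cspan H) \<and> D e z ` cspan H = cspan H) \<and>
     (\<forall>e\<in>H. \<exists>c>0. \<forall>z\<in>\<Xi>. \<forall>h\<in>cspan H. c * norm h \<le> norm (D e z h)) \<and>
     (\<forall>z\<in>\<Xi>. \<forall>z'\<in>\<Xi>. \<forall>x. reparam_lik H \<phi> l b0 eb0 z x = reparam_lik H \<phi> l b0 eb0 z' x)"

end

theory Submission imports Defs begin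

lemma subspace_cspan: "subspace (cspan (H::'h::real_normed_vector set))"
  unfolding subspace_def cspan_def
proof (intro conjI ballI allI)
  show "0 \<in> closure (span H)" using closure_subset span_zero by blast
next
  fix x y assume x: "x \<in> closure (span H)" and y: "y \<in> closure (span H)"
  from x obtain a where a: "\<forall>n. a n \<in> span H" "a \<longlonglongrightarrow> x" by (auto simp: closure_sequential)
  from y obtain b where b: "\<forall>n. b n \<in> span H" "b \<longlonglongrightarrow> y" by (auto simp: closure_sequential)
  have "(\<lambda>n. a n + b n) \<longlonglongrightarrow> x + y" using a b by (intro tendsto_add) auto
  moreover have "\<forall>n. a n + b n \<in> span H" using a b by (simp add: span_add)
  ultimately show "x + y \<in> closure (span H)" by (auto simp: closure_sequential)
next
  fix c :: real and x assume x: "x \<in> closure (span H)"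
  from x obtain a where a: "\<forall>n. a n \<in> span H" "a \<longlonglongrightarrow> x" by (auto simp: closure_sequential)
  have "(\<lambda>n. c *\<^sub>R a n) \<longlonglongrightarrow> c *\<^sub>R x" using a by (intro tendsto_scaleR) auto
  moreover have "\<forall>n. c *\<^sub>R a n \<in> span H" using a by (simp add: span_mul)
  ultimately show "c *\<^sub>R x \<in> closure (span H)" by (auto simp: closure_sequential)
qed

lemma cspan_lin: "h \<in> cspan H \<Longrightarrow> k \<in> cspan H \<Longrightarrow> a *\<^sub>R h + b *\<^sub>R k \<in> cspan H"
  using subspace_cspan[of H] by (simp add: subspace_add subspace_scale)

lemma cspan_diff: "h \<in> cspan H \<Longrightarrow> k \<in> cspan H \<Longrightarrow> h - k \<in> cspan H"
  using cspan_lin[of h H k 1 "-1"] by simp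

lemma span_sub_cspan: "span H \<subseteq> cspan H" unfolding cspan_def by (rule closure_subset)

lemma H_sub_cspan: "H \<subseteq> cspan H" using span_sub_cspan span_superset by blast

lemma zero_cspan: "0 \<in> cspan H" using span_sub_cspan span_zero by blast

lemma int_prod:
  fixes f g :: "'a \<Rightarrow> real"
  assumes "f \<in> borel_measurable M" "g \<in> borel_measurable M"
    "integrable M (\<lambda>x. (f x)\<^sup>2)" "integrable M (\<lambda>x. (g x)\<^sup>2)"
  shows "integrable M (\<lambda>x. f x * g x)"
proof (rule Bochner_Integration.integrable_bound[where f="\<lambda>x. (f x)\<^sup>2 + (g x)\<^sup>2"])
  show "integrable M (\<lambda>x. (f x)\<^sup>2 + (g x)\<^sup>2)" using assms by auto
  show "(\<lambda>x. f x * g x) \<in> borel_measurable M" using assms by measurable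
  show "AE x in M. norm (f x * g x) \<le> norm ((f x)\<^sup>2 + (g x)\<^sup>2)"
  proof (rule AE_I2)
    fix x
    have e: "(\<bar>f x\<bar> - \<bar>g x\<bar>)\<^sup>2 = (f x)\<^sup>2 + (g x)\<^sup>2 - 2 * (\<bar>f x\<bar> * \<bar>g x\<bar>)"
      by (simp add: power2_diff)
    have "0 \<le> (\<bar>f x\<bar> - \<bar>g x\<bar>)\<^sup>2" by simp
    moreover have "0 \<le> \<bar>f x\<bar> * \<bar>g x\<bar>" by simp
    ultimately have "\<bar>f x\<bar> * \<bar>g x\<bar> \<le> (f x)\<^sup>2 + (g x)\<^sup>2"
      unfolding e by linarith
    then show "norm (f x * g x) \<le> norm ((f x)\<^sup>2 + (g x)\<^sup>2)" by (simp add: abs_mult)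
  qed
qed

lemma int_sq_L2:
  fixes f :: "'a \<Rightarrow> real"
  assumes "f \<in> borel_measurable M" "integrable M (\<lambda>x. (f x)\<^sup>2)"
  shows "integrable M (\<lambda>x. f x * f x)"
  using assms by (simp add: power2_eq_square)

lemma ip_cong_AE:
  fixes f g f' g' :: "'a \<Rightarrow> real"
  assumes "f \<in> borel_measurable M" "g \<in> borel_measurable M"
    "f' \<in> borel_measurable M" "g' \<in> borel_measurable M"
    "AE x in M. f x = f' x" "AE x in M. g x = g' x"
  shows "ip M f g = ip M f' g'"
  unfolding ip_def
  by (rule integral_cong_AE) (use assms in auto)

lemma sq_diff_int:
  fixes f g :: "'a \<Rightarrow> real"
  assumes "f \<in> borel_measurable M" "g \<in> borel_measurable M"
    "integrable M (\<lambda>x. (f x)\<^sup>2)" "integrable M (\<lambda>x. (g x)\<^sup>2)"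
  shows "integrable M (\<lambda>x. (f x - g x)\<^sup>2)"
proof -
  have "integrable M (\<lambda>x. (f x)\<^sup>2 + (g x)\<^sup>2 - 2 * (f x * g x))"
    using int_prod[OF assms] assms by auto
  moreover have "(\<lambda>x. (f x - g x)\<^sup>2) = (\<lambda>x. (f x)\<^sup>2 + (g x)\<^sup>2 - 2 * (f x * g x))"
    by (simp add: fun_eq_iff power2_diff)
  ultimately show ?thesis by simp
qed

lemma sq_diff_le: "((a::real) - b)\<^sup>2 \<le> 2 * a\<^sup>2 + 2 * b\<^sup>2"
proof -
  have "0 \<le> (a + b)\<^sup>2" by simp
  then show ?thesis by (simp add: power2_diff power2_sum)
qed

lemma amgm_pt:
  fixes a b n :: real
  assumes n: "n > 0"
  shows "\<bar>a * b\<bar> \<le> (a\<^sup>2 / n + n * b\<^sup>2) / 2"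
proof -
  have "0 \<le> (\<bar>a\<bar> - n * \<bar>b\<bar>)\<^sup>2" by simp
  then have "2 * n * (\<bar>a\<bar> * \<bar>b\<bar>) \<le> a\<^sup>2 + n\<^sup>2 * b\<^sup>2"
    by (simp add: power2_diff power_mult_distrib algebra_simps)
  then have "\<bar>a\<bar> * \<bar>b\<bar> \<le> (a\<^sup>2 + n\<^sup>2 * b\<^sup>2) / (2 * n)"
    using n by (simp add: pos_le_divide_eq algebra_simps)
  also have "\<dots> = (a\<^sup>2 / n + n * b\<^sup>2) / 2"
    using n by (simp add: field_simps power2_eq_square)
  finally show ?thesis by (simp add: abs_mult)
qed

theorem lemma1:
  fixes \<mu> :: "'x measure"
    and l :: "real^'p \<Rightarrow> 'h::banach \<Rightarrow> real^'q \<Rightarrow> 'x \<Rightarrow> real"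
    and H :: "'h set" and \<Xi> :: "(real^'q) set"
    and \<phi> :: "real^'q \<Rightarrow> 'h \<Rightarrow> 'h" and D :: "'h \<Rightarrow> real^'q \<Rightarrow> 'h \<Rightarrow> 'h"
    and \<beta>0 :: "real^'p" and \<eta>b0 :: 'h
    and \<beta> :: "real^'p" and \<eta> :: 'h and \<zeta> :: "real^'q"
    and s sb :: "'x \<Rightarrow> real^'p" and A Ab :: "'h \<Rightarrow> 'x \<Rightarrow> real"
  assumes model: "\<forall>b e z. e \<in> H \<longrightarrow> z \<in> \<Xi> \<longrightarrow>
                    l b e z \<in> borel_measurable \<mu> \<and> prob_space (model_measure \<mu> l b e z)"
    and frr: "full_rank_reparam H \<Xi> \<phi> D l \<beta>0 \<eta>b0"
    and eta: "\<eta> \<in> H" and zeta: "\<zeta> \<in> \<Xi>"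
    and score_beta: "beta_score (model_measure \<mu> l \<beta> \<eta> \<zeta>) (\<lambda>b. l b \<eta> \<zeta>) \<beta> s"
    and score_eta: "score_op (model_measure \<mu> l \<beta> \<eta> \<zeta>) H H (\<lambda>e. l \<beta> e \<zeta>) \<eta> A"
    and info_inv: "info_invertible (model_measure \<mu> l \<beta> \<eta> \<zeta>) H A"
    and score_beta_bar: "beta_score (model_measure \<mu> (reparam_lik H \<phi> l) \<beta> (\<phi> \<zeta> \<eta>) \<zeta>)
                           (\<lambda>b. reparam_lik H \<phi> l b (\<phi> \<zeta> \<eta>) \<zeta>) \<beta> sb"
    and score_eta_bar: "score_op (model_measure \<mu> (reparam_lik H \<phi> l) \<beta> (\<phi> \<zeta> \<eta>) \<zeta>) (\<phi> \<zeta> ` H) H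
                           (\<lambda>e. reparam_lik H \<phi> l \<beta> e \<zeta>) (\<phi> \<zeta> \<eta>) Ab"
  shows "(AE x in model_measure \<mu> l \<beta> \<eta> \<zeta>.
            eff_score (model_measure \<mu> l \<beta> \<eta> \<zeta>) H A s x =
            eff_score (model_measure \<mu> (reparam_lik H \<phi> l) \<beta> (\<phi> \<zeta> \<eta>) \<zeta>) H Ab sb x) \<and>
         eff_info (model_measure \<mu> l \<beta> \<eta> \<zeta>) (eff_score (model_measure \<mu> l \<beta> \<eta> \<zeta>) H A s) =
         eff_info (model_measure \<mu> l \<beta> \<eta> \<zeta>)
           (eff_score (model_measure \<mu> (reparam_lik H \<phi> l) \<beta> (\<phi> \<zeta> \<eta>) \<zeta>) H Ab sb)"
proof -
  let ?M = "model_measure \<mu> l \<beta> \<eta> \<zeta>"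
  let ?Mb = "model_measure \<mu> (reparam_lik H \<phi> l) \<beta> (\<phi> \<zeta> \<eta>) \<zeta>"
  have phiH: "\<phi> \<zeta> ` H \<subseteq> H" and injphi: "inj_on (\<phi> \<zeta>) H"
    using frr zeta unfolding full_rank_reparam_def by auto
  have had: "hadamard_unif H \<Xi> \<phi> \<eta> (D \<eta>)"
    using frr eta unfolding full_rank_reparam_def by auto
  have Dlin: "\<forall>h\<in>cspan H. \<forall>k\<in>cspan H. \<forall>a b::real. D \<eta> \<zeta> (a *\<^sub>R h + b *\<^sub>R k) = a *\<^sub>R D \<eta> \<zeta> h + b *\<^sub>R D \<eta> \<zeta> k"
    and Dbd: "\<exists>C. \<forall>h\<in>cspan H. norm (D \<eta> \<zeta> h) \<le> C * norm h"
    and Donto: "D \<eta> \<zeta> ` cspan H = cspan H"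
    using frr eta zeta unfolding full_rank_reparam_def by blast+
  have inv: "\<And>e. e \<in> H \<Longrightarrow> inv_into H (\<phi> \<zeta>) (\<phi> \<zeta> e) = e" using injphi by (simp add: inv_into_f_f)
  have Mb: "?Mb = ?M" unfolding model_measure_def reparam_lik_def using inv eta by simp
  have sb_s: "sb = s"
  proof
    fix x
    have d1: "((\<lambda>b. l b \<eta> \<zeta> x) has_derivative (\<lambda>v. v \<bullet> s x)) (at \<beta>)"
      using score_beta unfolding beta_score_def by auto
    have d2: "((\<lambda>b. l b \<eta> \<zeta> x) has_derivative (\<lambda>v. v \<bullet> sb x)) (at \<beta>)"
      using score_beta_bar inv[OF eta] unfolding beta_score_def reparam_lik_def by auto
    have "(\<lambda>v. v \<bullet> s x) = (\<lambda>v. v \<bullet> sb x)" using has_derivative_unique[OF d1 d2] .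
    then have "(s x - sb x) \<bullet> s x = (s x - sb x) \<bullet> sb x" by metis
    then have "(s x - sb x) \<bullet> (s x - sb x) = 0" by (simp add: inner_diff_right)
    then show "sb x = s x" by simp
  qed
  have AL2: "\<forall>h\<in>cspan H. L2_0 ?M (A h)"
    and Alin: "\<forall>h\<in>cspan H. \<forall>k\<in>cspan H. \<forall>a b::real. AE x in ?M. A (a *\<^sub>R h + b *\<^sub>R k) x = a * A h x + b * A k x"
    and Abd: "\<exists>C. \<forall>h\<in>cspan H. ip ?M (A h) (A h) \<le> C * (norm h)\<^sup>2"
    and Asub: "\<forall>h\<in>H. \<exists>\<gamma>. \<gamma> 0 = \<eta> \<and> at 0 within {t. \<gamma> t \<in> H} \<noteq> bot \<and>
        ((\<lambda>t. (\<gamma> t - \<eta>) /\<^sub>R t) \<longlongrightarrow> h) (at 0 within {t. \<gamma> t \<in> H})"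
    and Ader: "\<forall>\<gamma> h. h \<in> cspan H \<and> \<gamma> 0 = \<eta> \<and>
        ((\<lambda>t. (\<gamma> t - \<eta>) /\<^sub>R t) \<longlongrightarrow> h) (at 0 within {t. \<gamma> t \<in> H}) \<longrightarrow>
        (\<forall>x. ((\<lambda>t. (l \<beta> (\<gamma> t) \<zeta> x - l \<beta> \<eta> \<zeta> x) / t) \<longlongrightarrow> A h x) (at 0 within {t. \<gamma> t \<in> H}))"
    using score_eta unfolding score_op_def by blast+
  have BL2: "\<forall>h\<in>cspan H. L2_0 ?M (Ab h)"
    and Blin: "\<forall>h\<in>cspan H. \<forall>k\<in>cspan H. \<forall>a b::real. AE x in ?M. Ab (a *\<^sub>R h + b *\<^sub>R k) x = a * Ab h x + b * Ab k x"
    and Bbd: "\<exists>C. \<forall>h\<in>cspan H. ip ?M (Ab h) (Ab h) \<le> C * (norm h)\<^sup>2"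
    and Bder: "\<forall>\<gamma> h. h \<in> cspan H \<and> \<gamma> 0 = \<phi> \<zeta> \<eta> \<and>
        ((\<lambda>t. (\<gamma> t - \<phi> \<zeta> \<eta>) /\<^sub>R t) \<longlongrightarrow> h) (at 0 within {t. \<gamma> t \<in> \<phi> \<zeta> ` H}) \<longrightarrow>
        (\<forall>x. ((\<lambda>t. (reparam_lik H \<phi> l \<beta> (\<gamma> t) \<zeta> x - reparam_lik H \<phi> l \<beta> (\<phi> \<zeta> \<eta>) \<zeta> x) / t) \<longlongrightarrow> Ab h x)
            (at 0 within {t. \<gamma> t \<in> \<phi> \<zeta> ` H}))"
    using score_eta_bar unfolding score_op_def Mb by blast+
  have chain: "Ab (D \<eta> \<zeta> h) x = A h x" if h: "h \<in> H" for h x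
  proof -
    obtain \<gamma> where g0: "\<gamma> 0 = \<eta>" and nb: "at 0 within {t. \<gamma> t \<in> H} \<noteq> bot"
      and glim: "((\<lambda>t. (\<gamma> t - \<eta>) /\<^sub>R t) \<longlongrightarrow> h) (at 0 within {t. \<gamma> t \<in> H})"
      using Asub h by blast
    define S where "S = {t. \<gamma> t \<in> H}"
    have hc: "h \<in> cspan H" using h H_sub_cspan by blast
    have dlim: "((\<lambda>t. (\<phi> \<zeta> (\<gamma> t) - \<phi> \<zeta> \<eta>) /\<^sub>R t) \<longlongrightarrow> D \<eta> \<zeta> h) (at 0 within S)"
      unfolding tendsto_at_iff_sequentially comp_def
    proof (intro allI impI)
      fix X :: "nat \<Rightarrow> real" assume XS: "\<forall>i. X i \<in> S - {0}" and X0: "X \<longlonglongrightarrow> 0"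
      have hs: "(\<lambda>n. (\<gamma> (X n) - \<eta>) /\<^sub>R X n) \<longlonglongrightarrow> h"
        using glim XS X0 unfolding tendsto_at_iff_sequentially comp_def S_def by blast
      have eq: "\<And>n. \<eta> + X n *\<^sub>R ((\<gamma> (X n) - \<eta>) /\<^sub>R X n) = \<gamma> (X n)"
        using XS by simp
      note imp = had[unfolded hadamard_unif_def, THEN spec[of _ X],
          THEN spec[of _ "\<lambda>n z. (\<gamma> (X n) - \<eta>) /\<^sub>R X n"], THEN spec[of _ "\<lambda>z. h"]]
      have prem: "X \<longlonglongrightarrow> 0 \<and> (\<forall>n. X n \<noteq> 0) \<and>
          (\<forall>n. \<forall>z\<in>\<Xi>. \<eta> + X n *\<^sub>R ((\<gamma> (X n) - \<eta>) /\<^sub>R X n) \<in> H) \<and> (\<forall>z\<in>\<Xi>. h \<in> H) \<and>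
          (\<forall>\<epsilon>>0. \<forall>\<^sub>F n in sequentially. \<forall>z\<in>\<Xi>. norm ((\<gamma> (X n) - \<eta>) /\<^sub>R X n - h) < \<epsilon>)"
      proof (intro conjI allI ballI impI)
        show "X \<longlonglongrightarrow> 0" by fact
        show "X n \<noteq> 0" for n using XS by auto
        show "\<eta> + X n *\<^sub>R ((\<gamma> (X n) - \<eta>) /\<^sub>R X n) \<in> H" for n
          using eq XS unfolding S_def by auto
        show "h \<in> H" by fact
        fix \<epsilon> :: real assume "\<epsilon> > 0"
        then have "\<forall>\<^sub>F n in sequentially. dist ((\<gamma> (X n) - \<eta>) /\<^sub>R X n) h < \<epsilon>"
          using hs by (simp add: tendsto_iff)
        then show "\<forall>\<^sub>F n in sequentially. \<forall>z\<in>\<Xi>. norm ((\<gamma> (X n) - \<eta>) /\<^sub>R X n - h) < \<epsilon>"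
          by (simp add: dist_norm)
      qed
      have "\<forall>\<epsilon>>0. \<forall>\<^sub>F n in sequentially. \<forall>z\<in>\<Xi>.
           norm ((\<phi> z (\<eta> + X n *\<^sub>R ((\<gamma> (X n) - \<eta>) /\<^sub>R X n)) - \<phi> z \<eta>) /\<^sub>R X n - D \<eta> z h) < \<epsilon>"
        using mp[OF imp prem] .
      then have "\<forall>\<epsilon>>0. \<forall>\<^sub>F n in sequentially. dist ((\<phi> \<zeta> (\<gamma> (X n)) - \<phi> \<zeta> \<eta>) /\<^sub>R X n) (D \<eta> \<zeta> h) < \<epsilon>"
        using zeta eq by (force simp: dist_norm elim: eventually_mono)
      then show "(\<lambda>n. (\<phi> \<zeta> (\<gamma> (X n)) - \<phi> \<zeta> \<eta>) /\<^sub>R X n) \<longlonglongrightarrow> D \<eta> \<zeta> h"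
        by (simp add: tendsto_iff)
    qed
    define y0 where "y0 = (SOME y. y \<notin> \<phi> \<zeta> ` H)"
    define \<gamma>' where "\<gamma>' = (\<lambda>t. if \<gamma> t \<in> H then \<phi> \<zeta> (\<gamma> t) else y0)"
    have Sset: "{t. \<gamma>' t \<in> \<phi> \<zeta> ` H} = S"
    proof (cases "\<exists>y. y \<notin> \<phi> \<zeta> ` H")
      case True then have "y0 \<notin> \<phi> \<zeta> ` H" unfolding y0_def by (rule someI_ex)
      then show ?thesis unfolding \<gamma>'_def S_def by auto
    next
      case False then have "H = UNIV" using phiH by auto
      then show ?thesis unfolding \<gamma>'_def S_def by auto
    qed
    have evS: "\<forall>\<^sub>F t in at 0 within S. t \<in> S" by (auto simp: eventually_at_filter)
    have g'0: "\<gamma>' 0 = \<phi> \<zeta> \<eta>" unfolding \<gamma>'_def using g0 eta by simp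
    have Dhc: "D \<eta> \<zeta> h \<in> cspan H" using Donto hc by blast
    have g'lim: "((\<lambda>t. (\<gamma>' t - \<phi> \<zeta> \<eta>) /\<^sub>R t) \<longlongrightarrow> D \<eta> \<zeta> h) (at 0 within {t. \<gamma>' t \<in> \<phi> \<zeta> ` H})"
      unfolding Sset
      by (rule tendsto_cong[THEN iffD1, OF _ dlim], rule eventually_mono[OF evS]) (simp add: \<gamma>'_def S_def)
    have L1: "((\<lambda>t. (reparam_lik H \<phi> l \<beta> (\<gamma>' t) \<zeta> x - reparam_lik H \<phi> l \<beta> (\<phi> \<zeta> \<eta>) \<zeta> x) / t) \<longlongrightarrow> Ab (D \<eta> \<zeta> h) x)
            (at 0 within S)"
      using mp[OF Bder[THEN spec[of _ \<gamma>'], THEN spec[of _ "D \<eta> \<zeta> h"]], OF conjI[OF Dhc conjI[OF g'0 g'lim]]]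
      unfolding Sset by blast
    have L1': "((\<lambda>t. (l \<beta> (\<gamma> t) \<zeta> x - l \<beta> \<eta> \<zeta> x) / t) \<longlongrightarrow> Ab (D \<eta> \<zeta> h) x) (at 0 within S)"
      by (rule tendsto_cong[THEN iffD1, OF _ L1], rule eventually_mono[OF evS])
        (simp add: \<gamma>'_def S_def reparam_lik_def inv eta)
    have L2: "((\<lambda>t. (l \<beta> (\<gamma> t) \<zeta> x - l \<beta> \<eta> \<zeta> x) / t) \<longlongrightarrow> A h x) (at 0 within S)"
      using Ader hc g0 glim unfolding S_def by blast
    show ?thesis using tendsto_unique[OF nb[folded S_def] L1' L2] .
  qed
  have AM: "A h \<in> borel_measurable ?M" "integrable ?M (\<lambda>x. (A h x)\<^sup>2)" if "h \<in> cspan H" for h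
    using AL2 that unfolding L2_0_def by auto
  have BM: "Ab h \<in> borel_measurable ?M" "integrable ?M (\<lambda>x. (Ab h x)\<^sup>2)" if "h \<in> cspan H" for h
    using BL2 that unfolding L2_0_def by auto
  have Dc: "D \<eta> \<zeta> h \<in> cspan H" if "h \<in> cspan H" for h using Donto that by blast
  have Dadd: "D \<eta> \<zeta> (c *\<^sub>R h + k) = c *\<^sub>R D \<eta> \<zeta> h + D \<eta> \<zeta> k" if "h \<in> cspan H" "k \<in> cspan H" for c h k
    using Dlin that by (metis scaleR_one)
  have Aadd: "AE x in ?M. A (c *\<^sub>R h + k) x = c * A h x + A k x" if "h \<in> cspan H" "k \<in> cspan H" for c h k
    using Alin[rule_format, OF that, of c 1] by simp
  have Badd: "AE x in ?M. Ab (c *\<^sub>R h + k) x = c * Ab h x + Ab k x" if "h \<in> cspan H" "k \<in> cspan H" for c h k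
    using Blin[rule_format, OF that, of c 1] by simp
  have spanAE0: "h \<in> span H \<and> (AE x in ?M. Ab (D \<eta> \<zeta> h) x = A h x)" if "h \<in> span H" for h
    using that
  proof (induction rule: span_induct_alt)
    case base
    have z: "(0::'h) \<in> cspan H" by (rule zero_cspan)
    have "D \<eta> \<zeta> 0 = 0" using Dadd[OF z z, of "-1"] by simp
    moreover have "AE x in ?M. A 0 x = 0" using Aadd[OF z z, of "-1"] by simp
    moreover have "AE x in ?M. Ab 0 x = 0" using Badd[OF z z, of "-1"] by simp
    ultimately show ?case by (auto simp: span_zero)
  next
    case (step c x y)
    have xc: "x \<in> cspan H" using step H_sub_cspan by blast
    have yc: "y \<in> cspan H" using step span_sub_cspan by blast
    have "D \<eta> \<zeta> (c *\<^sub>R x + y) = c *\<^sub>R D \<eta> \<zeta> x + D \<eta> \<zeta> y" by (rule Dadd[OF xc yc])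
    moreover note Badd[OF Dc[OF xc] Dc[OF yc], of c] Aadd[OF xc yc, of c] conjunct2[OF step.IH]
    moreover have "Ab (D \<eta> \<zeta> x) z = A x z" for z using chain step by blast
    moreover have "c *\<^sub>R x + y \<in> span H" using step by (simp add: span_add span_mul span_base)
    ultimately show ?case by auto
  qed
  have spanAE: "AE x in ?M. Ab (D \<eta> \<zeta> h) x = A h x" if "h \<in> span H" for h
    using spanAE0[OF that] by blast
  obtain CA where CA: "\<forall>h\<in>cspan H. ip ?M (A h) (A h) \<le> CA * (norm h)\<^sup>2" using Abd by blast
  obtain CB where CB: "\<forall>h\<in>cspan H. ip ?M (Ab h) (Ab h) \<le> CB * (norm h)\<^sup>2" using Bbd by blast
  obtain CD where CD: "\<forall>h\<in>cspan H. norm (D \<eta> \<zeta> h) \<le> CD * norm h" using Dbd by blast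
  have clAE: "AE x in ?M. Ab (D \<eta> \<zeta> h) x = A h x" if hc: "h \<in> cspan H" for h
  proof -
    define f where "f x = Ab (D \<eta> \<zeta> h) x - A h x" for x
    have fint: "integrable ?M (\<lambda>x. (f x)\<^sup>2)" unfolding f_def
      using sq_diff_int BM[OF Dc[OF hc]] AM[OF hc] by blast
    define K where "K = 2 * (\<bar>CB\<bar> * CD\<^sup>2 + \<bar>CA\<bar>) + 1"
    have K1: "K - 1 \<ge> 0"
    proof -
      have "0 \<le> \<bar>CB\<bar> * CD\<^sup>2" by simp
      moreover have "0 \<le> \<bar>CA\<bar>" by simp
      ultimately show ?thesis unfolding K_def by simp
    qed
    then have Kpos: "K > 0" by linarith
    have bound: "integral\<^sup>L ?M (\<lambda>x. (f x)\<^sup>2) \<le> 0 + e" if e: "e > 0" for e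
    proof -
      define \<delta> where "\<delta> = min 1 (e / K)"
      have \<delta>pos: "\<delta> > 0" using e Kpos by (simp add: \<delta>_def)
      obtain h' where h': "h' \<in> span H" "dist h' h < \<delta>"
        using hc \<delta>pos unfolding cspan_def closure_approachable by blast
      define d where "d = h - h'"
      have h'c: "h' \<in> cspan H" using h' span_sub_cspan by blast
      have dc: "d \<in> cspan H" unfolding d_def using cspan_diff hc h'c by blast
      have nd: "norm d < \<delta>" using h' by (simp add: d_def dist_norm norm_minus_commute)
      have Dh: "D \<eta> \<zeta> h = D \<eta> \<zeta> h' + D \<eta> \<zeta> d" using Dadd[OF h'c dc, of 1] by (simp add: d_def)
      have Bh: "AE x in ?M. Ab (D \<eta> \<zeta> h) x = Ab (D \<eta> \<zeta> h') x + Ab (D \<eta> \<zeta> d) x"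
        using Badd[OF Dc[OF h'c] Dc[OF dc], of 1] Dh by simp
      have Ah: "AE x in ?M. A h x = A h' x + A d x"
        using Aadd[OF h'c dc, of 1] by (simp add: d_def)
      have pt: "AE x in ?M. (f x)\<^sup>2 \<le> 2 * (Ab (D \<eta> \<zeta> d) x)\<^sup>2 + 2 * (A d x)\<^sup>2"
        using Bh Ah spanAE[OF h'(1)]
      proof eventually_elim
        case (elim x)
        then have "f x = Ab (D \<eta> \<zeta> d) x - A d x" by (simp add: f_def)
        then show ?case using sq_diff_le by simp
      qed
      have "integral\<^sup>L ?M (\<lambda>x. (f x)\<^sup>2) \<le> integral\<^sup>L ?M (\<lambda>x. 2 * (Ab (D \<eta> \<zeta> d) x)\<^sup>2 + 2 * (A d x)\<^sup>2)"
        by (rule integral_mono_AE[OF fint _ pt]) (use BM[OF Dc[OF dc]] AM[OF dc] in auto)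
      also have "\<dots> = 2 * ip ?M (Ab (D \<eta> \<zeta> d)) (Ab (D \<eta> \<zeta> d)) + 2 * ip ?M (A d) (A d)"
        using BM[OF Dc[OF dc]] AM[OF dc] by (simp add: ip_def power2_eq_square)
      also have "\<dots> \<le> 2 * (CB * (norm (D \<eta> \<zeta> d))\<^sup>2) + 2 * (CA * (norm d)\<^sup>2)"
        using CB CA Dc[OF dc] dc by (intro add_mono mult_left_mono) auto
      also have "\<dots> \<le> 2 * (\<bar>CB\<bar> * (CD\<^sup>2 * (norm d)\<^sup>2)) + 2 * (\<bar>CA\<bar> * (norm d)\<^sup>2)"
      proof -
        have "norm (D \<eta> \<zeta> d) \<le> CD * norm d" using CD dc by blast
        then have "(norm (D \<eta> \<zeta> d))\<^sup>2 \<le> (CD * norm d)\<^sup>2" by (intro power_mono) auto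
        then have a: "(norm (D \<eta> \<zeta> d))\<^sup>2 \<le> CD\<^sup>2 * (norm d)\<^sup>2" by (simp add: power_mult_distrib)
        have "CB * (norm (D \<eta> \<zeta> d))\<^sup>2 \<le> \<bar>CB\<bar> * (norm (D \<eta> \<zeta> d))\<^sup>2"
          by (intro mult_right_mono) auto
        also have "\<dots> \<le> \<bar>CB\<bar> * (CD\<^sup>2 * (norm d)\<^sup>2)" using a by (intro mult_left_mono) auto
        finally have b: "CB * (norm (D \<eta> \<zeta> d))\<^sup>2 \<le> \<bar>CB\<bar> * (CD\<^sup>2 * (norm d)\<^sup>2)" .
        have c: "CA * (norm d)\<^sup>2 \<le> \<bar>CA\<bar> * (norm d)\<^sup>2" by (intro mult_right_mono) auto
        show ?thesis using b c by linarith
      qed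
      also have "\<dots> = (K - 1) * (norm d)\<^sup>2" by (simp add: K_def algebra_simps)
      also have "\<dots> \<le> K * \<delta>\<^sup>2"
      proof -
        have "(norm d)\<^sup>2 \<le> \<delta>\<^sup>2" using nd by (intro power_mono) auto
        moreover note K1
        ultimately have "(K - 1) * (norm d)\<^sup>2 \<le> (K - 1) * \<delta>\<^sup>2" by (intro mult_left_mono) auto
        also have "\<dots> \<le> K * \<delta>\<^sup>2" by (intro mult_right_mono) auto
        finally show ?thesis .
      qed
      also have "\<dots> \<le> K * \<delta>"
      proof -
        have "\<delta> \<le> 1" by (simp add: \<delta>_def)
        then have "\<delta>\<^sup>2 \<le> \<delta>" using \<delta>pos by (simp add: power2_eq_square mult_le_cancel_right1)
        then show ?thesis using Kpos by (intro mult_left_mono) auto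
      qed
      also have "\<dots> \<le> K * (e / K)" using Kpos by (intro mult_left_mono) (auto simp: \<delta>_def)
      also have "\<dots> = 0 + e" using Kpos by simp
      finally show ?thesis .
    qed
    have "integral\<^sup>L ?M (\<lambda>x. (f x)\<^sup>2) \<le> 0" by (rule field_le_epsilon) (rule bound)
    moreover have "integral\<^sup>L ?M (\<lambda>x. (f x)\<^sup>2) \<ge> 0" by (rule integral_nonneg_AE) auto
    ultimately have "integral\<^sup>L ?M (\<lambda>x. (f x)\<^sup>2) = 0" by linarith
    then have "AE x in ?M. (f x)\<^sup>2 = 0" using integral_nonneg_eq_0_iff_AE[OF fint] by simp
    then show ?thesis by eventually_elim (simp add: f_def)
  qed
  have sM: "(\<lambda>y. s y $ j) \<in> borel_measurable ?M" "integrable ?M (\<lambda>y. (s y $ j)\<^sup>2)" for j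
    using score_beta unfolding beta_score_def L2_0_def by auto
  have perj: "\<exists>u. u \<in> cspan H \<and>
      (THE u. u \<in> cspan H \<and> (\<forall>k\<in>cspan H. ip ?M (A k) (A u) = ip ?M (A k) (\<lambda>y. s y $ j))) = u \<and>
      (THE v. v \<in> cspan H \<and> (\<forall>k\<in>cspan H. ip ?M (Ab k) (Ab v) = ip ?M (Ab k) (\<lambda>y. s y $ j))) = D \<eta> \<zeta> u" for j
  proof -
    define sj where "sj = (\<lambda>y. s y $ j)"
    have sjm: "sj \<in> borel_measurable ?M" "integrable ?M (\<lambda>x. (sj x)\<^sup>2)" using sM unfolding sj_def by auto
    define F where "F k = ip ?M (A k) sj" for k
    have prodint: "integrable ?M (\<lambda>x. A h x * sj x)" if "h \<in> cspan H" for h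
      using int_prod[OF AM(1)[OF that] sjm(1) AM(2)[OF that] sjm(2)] .
    have Flin: "\<forall>h\<in>cspan H. \<forall>k\<in>cspan H. \<forall>a b::real. F (a *\<^sub>R h + b *\<^sub>R k) = a * F h + b * F k"
    proof (intro ballI allI)
      fix h k a b assume hk: "h \<in> cspan H" "k \<in> cspan H"
      have "F (a *\<^sub>R h + b *\<^sub>R k) = integral\<^sup>L ?M (\<lambda>x. (a * A h x + b * A k x) * sj x)"
        unfolding F_def ip_def
      proof (rule integral_cong_AE)
        show "(\<lambda>x. A (a *\<^sub>R h + b *\<^sub>R k) x * sj x) \<in> borel_measurable ?M"
          using AM(1)[OF cspan_lin[OF hk]] sjm by measurable
        show "(\<lambda>x. (a * A h x + b * A k x) * sj x) \<in> borel_measurable ?M"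
          using AM(1)[OF hk(1)] AM(1)[OF hk(2)] sjm by measurable
        show "AE x in ?M. A (a *\<^sub>R h + b *\<^sub>R k) x * sj x = (a * A h x + b * A k x) * sj x"
          using Alin[rule_format, OF hk, of a b] by eventually_elim simp
      qed
      also have "(\<lambda>x. (a * A h x + b * A k x) * sj x) = (\<lambda>x. a * (A h x * sj x) + b * (A k x * sj x))"
        by (simp add: fun_eq_iff algebra_simps)
      also have "integral\<^sup>L ?M \<dots> = a * F h + b * F k"
        unfolding F_def ip_def using prodint[OF hk(1)] prodint[OF hk(2)] by simp
      finally show "F (a *\<^sub>R h + b *\<^sub>R k) = a * F h + b * F k" .
    qed
    have F0: "F 0 = 0" using Flin[rule_format, OF zero_cspan zero_cspan, of "-1" 1] by simp
    define Ssj where "Ssj = integral\<^sup>L ?M (\<lambda>x. (sj x)\<^sup>2)"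
    have Fbd: "\<exists>C. \<forall>h\<in>cspan H. \<bar>F h\<bar> \<le> C * norm h"
    proof (intro exI ballI)
      fix h assume hc: "h \<in> cspan H"
      show "\<bar>F h\<bar> \<le> ((\<bar>CA\<bar> + Ssj) / 2) * norm h"
      proof (cases "h = 0")
        case True then show ?thesis using F0 by simp
      next
        case False
        define n where "n = norm h"
        have n: "n > 0" using False by (simp add: n_def)
        have "\<bar>F h\<bar> \<le> integral\<^sup>L ?M (\<lambda>x. \<bar>A h x * sj x\<bar>)"
          unfolding F_def ip_def by (rule integral_abs_bound)
        also have "\<dots> \<le> integral\<^sup>L ?M (\<lambda>x. ((A h x)\<^sup>2 / n + n * (sj x)\<^sup>2) / 2)"
          using prodint[OF hc] AM[OF hc] sjm amgm_pt[OF n] by (intro integral_mono) auto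
        also have "\<dots> = (ip ?M (A h) (A h) / n + n * Ssj) / 2"
          using AM[OF hc] sjm by (simp add: ip_def Ssj_def power2_eq_square)
        also have "\<dots> \<le> (CA * n\<^sup>2 / n + n * Ssj) / 2"
          using CA hc n by (auto simp: n_def intro!: divide_right_mono)
        also have "\<dots> = (CA + Ssj) / 2 * n" using n by (simp add: field_simps power2_eq_square)
        also have "\<dots> \<le> ((\<bar>CA\<bar> + Ssj) / 2) * n" using n by (intro mult_right_mono) auto
        finally show ?thesis by (simp add: n_def)
      qed
    qed
    have ex1: "\<exists>!u. u \<in> cspan H \<and> (\<forall>k\<in>cspan H. ip ?M (A k) (A u) = F k)"
      using info_inv Flin Fbd unfolding info_invertible_def by blast
    define u where "u = (THE u. u \<in> cspan H \<and> (\<forall>k\<in>cspan H. ip ?M (A k) (A u) = F k))"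
    have u: "u \<in> cspan H" "\<forall>k\<in>cspan H. ip ?M (A k) (A u) = F k"
      using theI'[OF ex1] unfolding u_def by auto
    have uniq: "w = u" if "w \<in> cspan H" "\<forall>k\<in>cspan H. ip ?M (A k) (A w) = F k" for w
      using ex1 u that by blast
    have ipAB: "ip ?M (Ab (D \<eta> \<zeta> k)) (Ab (D \<eta> \<zeta> w)) = ip ?M (A k) (A w)" if "k \<in> cspan H" "w \<in> cspan H" for k w
      by (rule ip_cong_AE) (use that BM AM Dc clAE in auto)
    have ipS: "ip ?M (Ab (D \<eta> \<zeta> k)) sj = ip ?M (A k) sj" if "k \<in> cspan H" for k
      by (rule ip_cong_AE) (use that BM AM Dc clAE sjm in auto)
    have PB: "(THE v. v \<in> cspan H \<and> (\<forall>k\<in>cspan H. ip ?M (Ab k) (Ab v) = ip ?M (Ab k) sj)) = D \<eta> \<zeta> u"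
    proof (rule the_equality)
      show "D \<eta> \<zeta> u \<in> cspan H \<and> (\<forall>k\<in>cspan H. ip ?M (Ab k) (Ab (D \<eta> \<zeta> u)) = ip ?M (Ab k) sj)"
      proof (intro conjI ballI)
        show "D \<eta> \<zeta> u \<in> cspan H" using Dc u by blast
        fix k assume "k \<in> cspan H"
        then obtain k' where k': "k' \<in> cspan H" "k = D \<eta> \<zeta> k'" using Donto by blast
        show "ip ?M (Ab k) (Ab (D \<eta> \<zeta> u)) = ip ?M (Ab k) sj"
          using ipAB[OF k'(1) u(1)] ipS[OF k'(1)] u(2) k' unfolding F_def by simp
      qed
    next
      fix v assume v: "v \<in> cspan H \<and> (\<forall>k\<in>cspan H. ip ?M (Ab k) (Ab v) = ip ?M (Ab k) sj)"
      then obtain w where w: "w \<in> cspan H" "v = D \<eta> \<zeta> w" using Donto by blast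
      have "\<forall>k\<in>cspan H. ip ?M (A k) (A w) = F k"
      proof
        fix k assume k: "k \<in> cspan H"
        have "ip ?M (A k) (A w) = ip ?M (Ab (D \<eta> \<zeta> k)) (Ab v)" using ipAB[OF k w(1)] w by simp
        also have "\<dots> = ip ?M (Ab (D \<eta> \<zeta> k)) sj" using v Dc[OF k] by blast
        also have "\<dots> = F k" using ipS[OF k] unfolding F_def by simp
        finally show "ip ?M (A k) (A w) = F k" .
      qed
      then show "v = D \<eta> \<zeta> u" using uniq w by blast
    qed
    show ?thesis using u PB unfolding u_def F_def sj_def by blast
  qed
  then have "\<exists>U. \<forall>j. U j \<in> cspan H \<and> (THE u. u \<in> cspan H \<and> (\<forall>k\<in>cspan H. ip ?M (A k) (A u) = ip ?M (A k) (\<lambda>y. s y $ j))) = U j \<and> (THE v. v \<in> cspan H \<and> (\<forall>k\<in>cspan H. ip ?M (Ab k) (Ab v) = ip ?M (Ab k) (\<lambda>y. s y $ j))) = D \<eta> \<zeta> (U j)"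
    by (intro choice allI)
  then obtain U where U0: "\<forall>j. U j \<in> cspan H \<and> (THE u. u \<in> cspan H \<and> (\<forall>k\<in>cspan H. ip ?M (A k) (A u) = ip ?M (A k) (\<lambda>y. s y $ j))) = U j \<and> (THE v. v \<in> cspan H \<and> (\<forall>k\<in>cspan H. ip ?M (Ab k) (Ab v) = ip ?M (Ab k) (\<lambda>y. s y $ j))) = D \<eta> \<zeta> (U j)"
    by (rule exE)
  have U: "\<And>j. U j \<in> cspan H"
    "\<And>j. (THE u. u \<in> cspan H \<and> (\<forall>k\<in>cspan H. ip ?M (A k) (A u) = ip ?M (A k) (\<lambda>y. s y $ j))) = U j"
    "\<And>j. (THE v. v \<in> cspan H \<and> (\<forall>k\<in>cspan H. ip ?M (Ab k) (Ab v) = ip ?M (Ab k) (\<lambda>y. s y $ j))) = D \<eta> \<zeta> (U j)"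
    using U0 by auto
  have effA: "eff_score ?M H A s = (\<lambda>x. \<chi> j. s x $ j - A (U j) x)"
    unfolding eff_score_def U(2) ..
  have effB: "eff_score ?Mb H Ab sb = (\<lambda>x. \<chi> j. s x $ j - Ab (D \<eta> \<zeta> (U j)) x)"
    unfolding eff_score_def Mb sb_s U(3) ..
  have AEall: "AE x in ?M. \<forall>j\<in>UNIV. Ab (D \<eta> \<zeta> (U j)) x = A (U j) x"
    by (rule AE_finite_allI) (auto intro: clAE U(1))
  have AEeq: "AE x in ?M. (\<chi> j. s x $ j - A (U j) x) = (\<chi> j. s x $ j - Ab (D \<eta> \<zeta> (U j)) x)"
    using AEall by eventually_elim (simp add: vec_eq_iff)
  have info: "eff_info ?M (\<lambda>x. \<chi> j. s x $ j - A (U j) x) = eff_info ?M (\<lambda>x. \<chi> j. s x $ j - Ab (D \<eta> \<zeta> (U j)) x)"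
    unfolding eff_info_def
  proof (simp add: vec_eq_iff, intro allI)
    fix i j
    show "integral\<^sup>L ?M (\<lambda>x. (s x $ i - A (U i) x) * (s x $ j - A (U j) x)) =
          integral\<^sup>L ?M (\<lambda>x. (s x $ i - Ab (D \<eta> \<zeta> (U i)) x) * (s x $ j - Ab (D \<eta> \<zeta> (U j)) x))"
    proof (rule integral_cong_AE)
      show "(\<lambda>x. (s x $ i - A (U i) x) * (s x $ j - A (U j) x)) \<in> borel_measurable ?M"
        using sM(1)[of i] sM(1)[of j] AM(1)[OF U(1)[of i]] AM(1)[OF U(1)[of j]] by measurable
      show "(\<lambda>x. (s x $ i - Ab (D \<eta> \<zeta> (U i)) x) * (s x $ j - Ab (D \<eta> \<zeta> (U j)) x)) \<in> borel_measurable ?M"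
        using sM(1)[of i] sM(1)[of j] BM(1)[OF Dc[OF U(1)[of i]]] BM(1)[OF Dc[OF U(1)[of j]]] by measurable
      show "AE x in ?M. (s x $ i - A (U i) x) * (s x $ j - A (U j) x) =
          (s x $ i - Ab (D \<eta> \<zeta> (U i)) x) * (s x $ j - Ab (D \<eta> \<zeta> (U j)) x)"
        using AEall by eventually_elim simp
    qed
  qed
  show ?thesis unfolding effA effB using AEeq info by simp
qed

end
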